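(* Let $(M,g)$ be a 4-dimensional Lorentzian manifold with Levi-Civita connection $\nabla$, and let $K_{kl}$ be a symmetric tensor with trace $K=K^p{}_p$ satisfying $$\nabla_jK_{kl}=\frac{5}{18}\nabla_jK\,g_{kl}-\frac1{18}\nabla_kK\,g_{jl}-\frac1{18}\nabla_lK\,g_{jk}.$$ Then (i) $\nabla^kK_{kl}=0$ and $K$ is a conformal Killing tensor in the sense $\nabla_jK_{kl}+\nabla_lK_{jk}+\nabla_kK_{lj}=\frac16(\nabla_jK\,g_{kl}+\nabla_lK\,g_{jk}+\nabla_kK\,g_{lj})$; (ii) $\mathscr C_{kl}=K_{kl}-\frac K3g_{kl}$ is a Codazzi tensor ($\nabla_j\mathscr C_{kl}=\nabla_k\mathscr C_{jl}$) and $K_{kl}=\mathscr C_{kl}-g_{kl}\mathscr C^p{}_p$. Consequently, if $T_{kl}$ is such that $R_{kl}-\frac12Rg_{kl}=T_{kl}+K_{kl}$, then $(g,T)$ is simultaneously a solution of conformal Killing gravity (Einstein equations sourced by $T$ plus a divergence-free conformal Killing tensor) and of Cotton gravity in Codazzi form ($R_{kl}-\frac12Rg_{kl}=T_{kl}+\mathscr C_{kl}-g_{kl}\mathscr C^p{}_p$ with $\mathscr C$ Codazzi).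
   Context: $R_{kl}$ and $R$ denote the Ricci tensor and scalar curvature of $g$. *)

theory Defs
  imports "HOL-Analysis.Analysis"
begin

text \<open>Local (chart) formalisation on an open coordinate domain U of R^4.
  Tensor fields are given by their components, indexed by the 4-element type 4.\<close>

type_synonym pt = "real ^ 4"
type_synonym scal = "pt \<Rightarrow> real"
type_synonym tens2 = "4 \<Rightarrow> 4 \<Rightarrow> pt \<Rightarrow> real"

definition pd :: "4 \<Rightarrow> scal \<Rightarrow> scal" where
  "pd j f x = frechet_derivative f (at x) (axis j 1)"

fun Ck :: "nat \<Rightarrow> pt set \<Rightarrow> scal \<Rightarrow> bool" where
  "Ck 0 U f = continuous_on U f"
| "Ck (Suc n) U f = (f differentiable_on U \<and> (\<forall>j. Ck n U (pd j f)))"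

definition smooth_fun :: "pt set \<Rightarrow> scal \<Rightarrow> bool" where
  "smooth_fun U f = (\<forall>n. Ck n U f)"

definition gmat :: "tens2 \<Rightarrow> pt \<Rightarrow> real ^ 4 ^ 4" where
  "gmat g x = (\<chi> i j. g i j x)"

definition ginv :: "tens2 \<Rightarrow> tens2" where
  "ginv g i j x = matrix_inv (gmat g x) $ i $ j"

definition lorentzian_at :: "tens2 \<Rightarrow> pt \<Rightarrow> bool" where
  "lorentzian_at g x = ((\<forall>i j. g i j x = g j i x) \<and>
     (\<exists>P :: real ^ 4 ^ 4. invertible P \<and>
        transpose P ** gmat g x ** P = (\<chi> i j. if i = j then (if i = 0 then -1 else 1) else 0)))"

definition christoffel :: "tens2 \<Rightarrow> 4 \<Rightarrow> 4 \<Rightarrow> 4 \<Rightarrow> scal" where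
  "christoffel g i k l x = (1/2) * (\<Sum>m\<in>UNIV. ginv g i m x *
      (pd k (g m l) x + pd l (g m k) x - pd m (g k l) x))"

text \<open>Levi-Civita covariant derivative of a (0,2)-tensor: cov g K j k l = nabla_j K_kl.\<close>
definition cov :: "tens2 \<Rightarrow> tens2 \<Rightarrow> 4 \<Rightarrow> 4 \<Rightarrow> 4 \<Rightarrow> scal" where
  "cov g K j k l x = pd j (K k l) x
     - (\<Sum>p\<in>UNIV. christoffel g p j k x * K p l x)
     - (\<Sum>p\<in>UNIV. christoffel g p j l x * K k p x)"

definition trace :: "tens2 \<Rightarrow> tens2 \<Rightarrow> scal" where
  "trace g K x = (\<Sum>p\<in>UNIV. \<Sum>q\<in>UNIV. ginv g p q x * K p q x)"

definition divergence :: "tens2 \<Rightarrow> tens2 \<Rightarrow> 4 \<Rightarrow> scal" where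
  "divergence g K l x = (\<Sum>k\<in>UNIV. \<Sum>j\<in>UNIV. ginv g k j x * cov g K j k l x)"

definition riemann :: "tens2 \<Rightarrow> 4 \<Rightarrow> 4 \<Rightarrow> 4 \<Rightarrow> 4 \<Rightarrow> scal" where
  "riemann g i j k l x = pd k (christoffel g i l j) x - pd l (christoffel g i k j) x
     + (\<Sum>p\<in>UNIV. christoffel g i k p x * christoffel g p l j x)
     - (\<Sum>p\<in>UNIV. christoffel g i l p x * christoffel g p k j x)"

definition ricci :: "tens2 \<Rightarrow> tens2" where
  "ricci g j l x = (\<Sum>k\<in>UNIV. riemann g k j k l x)"

definition scalar_curv :: "tens2 \<Rightarrow> scal" where
  "scalar_curv g = trace g (ricci g)"

definition einstein :: "tens2 \<Rightarrow> tens2" where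
  "einstein g k l x = ricci g k l x - (1/2) * scalar_curv g x * g k l x"

definition sym_tensor :: "pt set \<Rightarrow> tens2 \<Rightarrow> bool" where
  "sym_tensor U K = (\<forall>x\<in>U. \<forall>k l. K k l x = K l k x)"

definition smooth_tensor :: "pt set \<Rightarrow> tens2 \<Rightarrow> bool" where
  "smooth_tensor U K = (\<forall>k l. smooth_fun U (K k l))"

definition divergence_free :: "pt set \<Rightarrow> tens2 \<Rightarrow> tens2 \<Rightarrow> bool" where
  "divergence_free U g K = (\<forall>x\<in>U. \<forall>l. divergence g K l x = 0)"

definition conformal_killing :: "pt set \<Rightarrow> tens2 \<Rightarrow> tens2 \<Rightarrow> bool" where
  "conformal_killing U g K = (\<forall>x\<in>U. \<forall>j k l.
     cov g K j k l x + cov g K l j k x + cov g K k l j x =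
     (1/6) * (pd j (trace g K) x * g k l x + pd l (trace g K) x * g j k x
              + pd k (trace g K) x * g l j x))"

definition codazzi :: "pt set \<Rightarrow> tens2 \<Rightarrow> tens2 \<Rightarrow> bool" where
  "codazzi U g C = (\<forall>x\<in>U. \<forall>j k l. cov g C j k l x = cov g C k j l x)"

definition conformal_killing_gravity :: "pt set \<Rightarrow> tens2 \<Rightarrow> tens2 \<Rightarrow> bool" where
  "conformal_killing_gravity U g T = (\<exists>K. smooth_tensor U K \<and> sym_tensor U K \<and>
     divergence_free U g K \<and> conformal_killing U g K \<and>
     (\<forall>x\<in>U. \<forall>k l. einstein g k l x = T k l x + K k l x))"

definition cotton_gravity_codazzi :: "pt set \<Rightarrow> tens2 \<Rightarrow> tens2 \<Rightarrow> bool" where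
  "cotton_gravity_codazzi U g T = (\<exists>C. smooth_tensor U C \<and> sym_tensor U C \<and>
     codazzi U g C \<and>
     (\<forall>x\<in>U. \<forall>k l. einstein g k l x = T k l x + C k l x - g k l x * trace g C x))"

end

theory Submission
  imports Defs
begin

lemma diff_on_open: "open U \<Longrightarrow> f differentiable_on U \<longleftrightarrow> (\<forall>x\<in>U. f differentiable at x)"
  by (simp add: differentiable_on_eq_differentiable_at)

lemma hd_iff:
  assumes "open U" "x \<in> U" "\<forall>y\<in>U. f y = h y"
  shows "(f has_derivative D) (at x) \<longleftrightarrow> (h has_derivative D) (at x)"
proof
  assume "(f has_derivative D) (at x)"
  then show "(h has_derivative D) (at x)"
    by (rule has_derivative_transform_within_open[OF _ assms(1,2)]) (use assms(3) in blast)
next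
  assume "(h has_derivative D) (at x)"
  then show "(f has_derivative D) (at x)"
    by (rule has_derivative_transform_within_open[OF _ assms(1,2)]) (use assms(3) in auto)
qed

lemma pd_cong:
  assumes "open U" "x \<in> U" "\<forall>y\<in>U. f y = h y"
  shows "pd j f x = pd j h x"
proof -
  have "\<And>D. (f has_derivative D) (at x) \<longleftrightarrow> (h has_derivative D) (at x)"
    using hd_iff[OF assms] .
  then show ?thesis unfolding pd_def frechet_derivative_def by presburger
qed

lemma pd_has:
  assumes "(f has_derivative D) (at x)" shows "pd j f x = D (axis j 1)"
  using frechet_derivative_at[OF assms] unfolding pd_def by simp

lemma diff_cong:
  assumes "open U" "x \<in> U" "\<forall>y\<in>U. f y = h y"
  shows "f differentiable at x \<longleftrightarrow> h differentiable at x"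
proof -
  have "\<And>D. (f has_derivative D) (at x) \<longleftrightarrow> (h has_derivative D) (at x)"
    using hd_iff[OF assms] .
  then show ?thesis unfolding differentiable_def by blast
qed

lemma pd_works: "f differentiable at x \<Longrightarrow> (f has_derivative frechet_derivative f (at x)) (at x)"
  by (simp add: frechet_derivative_works)

lemma pd_const: "pd j (\<lambda>x. c) x = 0"
  using pd_has[OF has_derivative_const] by simp

lemma pd_add:
  assumes "f differentiable at x" "h differentiable at x"
  shows "pd j (\<lambda>y. f y + h y) x = pd j f x + pd j h x"
  using pd_has[OF has_derivative_add[OF pd_works[OF assms(1)] pd_works[OF assms(2)]]]
  unfolding pd_def by simp

lemma pd_mult:
  assumes "f differentiable at x" "h differentiable at x"
  shows "pd j (\<lambda>y. f y * h y) x = pd j f x * h x + f x * pd j h x"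
  using pd_has[OF has_derivative_mult[OF pd_works[OF assms(1)] pd_works[OF assms(2)]]]
  unfolding pd_def by (simp add: algebra_simps)

lemma pd_inverse:
  assumes "f differentiable at x" "f x \<noteq> 0"
  shows "pd j (\<lambda>y. inverse (f y)) x = - (pd j f x * (inverse (f x) * inverse (f x)))"
  using pd_has[OF Deriv.has_derivative_inverse[OF assms(2) pd_works[OF assms(1)]]]
  unfolding pd_def by (simp add: algebra_simps)

lemma Ck_cong:
  assumes "open U" shows "\<forall>y\<in>U. f y = h y \<Longrightarrow> Ck n U f = Ck n U h"
proof (induction n arbitrary: f h)
  case 0
  then show ?case using continuous_on_cong by force
next
  case (Suc n)
  have d: "(f differentiable_on U) = (h differentiable_on U)"
    using Suc.prems assms unfolding diff_on_open[OF assms] using diff_cong[OF assms _ Suc.prems] by blast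
  have "Ck n U (pd j f) = Ck n U (pd j h)" for j
    using Suc.IH pd_cong[OF assms _ Suc.prems] by blast
  then show ?case using d by simp
qed

lemma Ck_Suc_imp: "Ck (Suc n) U f \<Longrightarrow> Ck n U f"
proof (induction n arbitrary: f)
  case 0 then show ?case by (simp add: differentiable_imp_continuous_on)
next
  case (Suc n)
  have "f differentiable_on U" "\<And>j. Ck (Suc n) U (pd j f)" using Suc.prems by simp_all
  then show ?case using Suc.IH by (simp only: Ck.simps) blast
qed

lemma Ck_const: "Ck n U (\<lambda>x. c)"
proof (induction n arbitrary: c)
  case 0 then show ?case by simp
next
  case (Suc n)
  have "pd j (\<lambda>x. c) = (\<lambda>x. 0)" for j by (rule ext) (simp add: pd_const)
  then show ?case using Suc by simp
qed

lemma Ck_diff_at: "open U \<Longrightarrow> Ck (Suc n) U f \<Longrightarrow> x \<in> U \<Longrightarrow> f differentiable at x"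
  by (simp add: diff_on_open)

lemma Ck_add:
  assumes "open U" shows "Ck n U f \<Longrightarrow> Ck n U h \<Longrightarrow> Ck n U (\<lambda>x. f x + h x)"
proof (induction n arbitrary: f h)
  case 0 then show ?case unfolding Ck.simps by (rule continuous_on_add)
next
  case (Suc n)
  have d: "(\<lambda>x. f x + h x) differentiable_on U" using Suc.prems by (intro differentiable_on_add) simp_all
  have "Ck n U (pd j (\<lambda>x. f x + h x))" for j
  proof -
    have "Ck n U (pd j f)" "Ck n U (pd j h)" using Suc.prems by simp_all
    then have "Ck n U (\<lambda>x. pd j f x + pd j h x)" by (rule Suc.IH)
    moreover have "\<forall>y\<in>U. pd j (\<lambda>x. f x + h x) y = pd j f y + pd j h y"
    proof
      fix y assume y: "y \<in> U"
      show "pd j (\<lambda>x. f x + h x) y = pd j f y + pd j h y"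
        by (rule pd_add[OF Ck_diff_at[OF assms Suc.prems(1) y] Ck_diff_at[OF assms Suc.prems(2) y]])
    qed
    ultimately show ?thesis by (rule Ck_cong[OF assms, THEN iffD2, rotated])
  qed
  then show ?case using d by (simp only: Ck.simps) blast
qed

lemma Ck_mult:
  assumes "open U" shows "Ck n U f \<Longrightarrow> Ck n U h \<Longrightarrow> Ck n U (\<lambda>x. f x * h x)"
proof (induction n arbitrary: f h)
  case 0 then show ?case unfolding Ck.simps by (rule continuous_on_mult)
next
  case (Suc n)
  have d: "(\<lambda>x. f x * h x) differentiable_on U" using Suc.prems by (intro differentiable_on_mult) simp_all
  have "Ck n U (pd j (\<lambda>x. f x * h x))" for j
  proof -
    have a: "Ck n U (pd j f)" "Ck n U (pd j h)" using Suc.prems by simp_all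
    have b: "Ck n U f" "Ck n U h" using Suc.prems Ck_Suc_imp by blast+
    have "Ck n U (\<lambda>x. pd j f x * h x)" "Ck n U (\<lambda>x. f x * pd j h x)"
      using Suc.IH a b by blast+
    then have "Ck n U (\<lambda>x. pd j f x * h x + f x * pd j h x)" by (rule Ck_add[OF assms])
    moreover have "\<forall>y\<in>U. pd j (\<lambda>x. f x * h x) y = pd j f y * h y + f y * pd j h y"
    proof
      fix y assume y: "y \<in> U"
      show "pd j (\<lambda>x. f x * h x) y = pd j f y * h y + f y * pd j h y"
        by (rule pd_mult[OF Ck_diff_at[OF assms Suc.prems(1) y] Ck_diff_at[OF assms Suc.prems(2) y]])
    qed
    ultimately show ?thesis by (rule Ck_cong[OF assms, THEN iffD2, rotated])
  qed
  then show ?case using d by (simp only: Ck.simps) blast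
qed

lemma Ck_inverse:
  assumes "open U" shows "Ck n U f \<Longrightarrow> \<forall>x\<in>U. f x \<noteq> 0 \<Longrightarrow> Ck n U (\<lambda>x. inverse (f x))"
proof (induction n arbitrary: f)
  case 0 then show ?case unfolding Ck.simps by (rule continuous_on_inverse)
next
  case (Suc n)
  have d: "(\<lambda>x. inverse (f x)) differentiable_on U" using Suc.prems
    by (simp add: differentiable_on_inverse)
  have "Ck n U (pd j (\<lambda>x. inverse (f x)))" for j
  proof -
    have i: "Ck n U (\<lambda>x. inverse (f x))" using Suc Ck_Suc_imp by blast
    have "Ck n U (\<lambda>x. inverse (f x) * inverse (f x))" using Ck_mult[OF assms i i] .
    then have "Ck n U (\<lambda>x. pd j f x * (inverse (f x) * inverse (f x)))"
      using Ck_mult[OF assms] Suc.prems by simp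
    then have "Ck n U (\<lambda>x. (-1) * (pd j f x * (inverse (f x) * inverse (f x))))"
      using Ck_mult[OF assms Ck_const] by blast
    moreover have "\<forall>y\<in>U. pd j (\<lambda>x. inverse (f x)) y = (-1) * (pd j f y * (inverse (f y) * inverse (f y)))"
    proof
      fix y assume y: "y \<in> U"
      have "f differentiable at y" using Suc.prems(1) y assms by (simp add: diff_on_open)
      then show "pd j (\<lambda>x. inverse (f x)) y = (-1) * (pd j f y * (inverse (f y) * inverse (f y)))"
        using pd_inverse Suc.prems(2) y by simp
    qed
    ultimately show ?thesis by (rule Ck_cong[OF assms, THEN iffD2, rotated])
  qed
  then show ?case using d by (simp only: Ck.simps) blast
qed

lemma Ck_sum:
  assumes "open U" "finite S" shows "(\<And>i. i \<in> S \<Longrightarrow> Ck n U (f i)) \<Longrightarrow> Ck n U (\<lambda>x. \<Sum>i\<in>S. f i x)"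
  using assms(2)
proof (induction S rule: finite_induct)
  case empty then show ?case using Ck_const by simp
next
  case (insert i S)
  have "Ck n U (\<lambda>x. f i x + (\<Sum>i\<in>S. f i x))"
    using Ck_add[OF assms(1)] insert.prems insert.IH by blast
  then show ?case using insert.hyps by simp
qed

lemma Ck_prod:
  assumes "open U" "finite S" shows "(\<And>i. i \<in> S \<Longrightarrow> Ck n U (f i)) \<Longrightarrow> Ck n U (\<lambda>x. \<Prod>i\<in>S. f i x)"
  using assms(2)
proof (induction S rule: finite_induct)
  case empty then show ?case using Ck_const by simp
next
  case (insert i S)
  have "Ck n U (\<lambda>x. f i x * (\<Prod>i\<in>S. f i x))"
    using Ck_mult[OF assms(1)] insert.prems insert.IH by blast
  then show ?case using insert.hyps by simp
qed


lemma inv_facts: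
  assumes "invertible (A :: real^4^4)"
  shows "A ** matrix_inv A = mat 1" "matrix_inv A ** A = mat 1"
proof -
  obtain A' where "A ** A' = mat 1 \<and> A' ** A = mat 1" using assms unfolding invertible_def by blast
  then have "A ** matrix_inv A = mat 1 \<and> matrix_inv A ** A = mat 1"
    unfolding matrix_inv_def by (rule someI)
  then show "A ** matrix_inv A = mat 1" "matrix_inv A ** A = mat 1" by simp_all
qed

lemma lor_invertible:
  assumes "lorentzian_at g x" shows "invertible (gmat g x)"
proof -
  obtain P :: "real^4^4" where P: "invertible P"
    "transpose P ** gmat g x ** P = (\<chi> i j. if i = j then (if i = 0 then -1 else 1) else 0)"
    using assms unfolding lorentzian_at_def by blast
  let ?D = "(\<chi> i j. if i = j then (if i = 0 then -1 else 1) else 0) :: real^4^4"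
  have "det ?D = (\<Prod>i\<in>UNIV. ?D $ i $ i)" by (rule det_diagonal) simp
  also have "\<dots> \<noteq> 0" by (simp add: prod_zero_iff)
  finally have "det (transpose P ** gmat g x ** P) \<noteq> 0" using P(2) by simp
  then show ?thesis by (simp add: det_mul invertible_det_nz)
qed

lemma cramer_inv:
  assumes "invertible (G :: real^4^4)"
  shows "matrix_inv G $ i $ j = det (\<chi> r c. if c = i then (if r = j then 1 else 0) else G$r$c) / det G"
proof -
  let ?B = "matrix_inv G"
  have d: "det G \<noteq> 0" using assms invertible_det_nz by blast
  have "G *v (?B *v axis j 1) = axis j 1"
    by (simp add: matrix_vector_mul_assoc inv_facts[OF assms])
  then have "?B *v axis j 1 = (\<chi> k. det(\<chi> r c. if c=k then (axis j 1)$r else G$r$c) / det G)"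
    using cramer[OF d] by blast
  then have "(?B *v axis j 1) $ i = det(\<chi> r c. if c=i then (axis j 1)$r else G$r$c) / det G"
    by simp
  moreover have "(?B *v axis j 1) $ i = ?B $ i $ j"
    by (simp add: matrix_vector_mult_basis column_def)
  moreover have "((\<chi> r c. if c=i then (axis j 1)$r else G$r$c)::real^4^4) = (\<chi> r c. if c = i then (if r = j then 1 else 0) else G$r$c)"
    by (simp add: axis_def vec_eq_iff)
  ultimately show ?thesis by simp
qed

lemma Ck_det:
  assumes "open U" "\<And>r c. Ck n U (M r c)"
  shows "Ck n U (\<lambda>x. det ((\<chi> r c. M r c x) :: real^4^4))"
proof -
  have "Ck n U (\<lambda>x. \<Sum>p\<in>{p. p permutes (UNIV::4 set)}. of_int (sign p) * (\<Prod>i\<in>UNIV. M i (p i) x))"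
    by (intro Ck_sum[OF assms(1)] Ck_mult[OF assms(1)] Ck_prod[OF assms(1)] Ck_const assms(2))
       (simp_all add: finite_permutations)
  then show ?thesis unfolding det_def by simp
qed


lemma alg_div:
  fixes a :: "4 \<Rightarrow> real" and G B :: "4 \<Rightarrow> 4 \<Rightarrow> real"
  assumes sym: "\<And>i j. G i j = G j i"
    and L1: "\<And>a b. (\<Sum>p\<in>UNIV. G a p * B p b) = (if a = b then 1 else 0)"
    and L2: "\<And>a b. (\<Sum>p\<in>UNIV. B a p * G p b) = (if a = b then 1 else 0)"
  shows "(\<Sum>k\<in>UNIV. \<Sum>j\<in>UNIV. B k j * ((5/18) * a j * G k l - (1/18) * a k * G j l - (1/18) * a l * G j k)) = 0"
proof -
  have e: "B k j * ((5/18) * a j * G k l - (1/18) * a k * G j l - (1/18) * a l * G j k)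
     = (5/18) * a j * (G l k * B k j) - (1/18) * a k * (B k j * G j l) - (1/18) * a l * (B k j * G j k)" for k j
    using sym[of k l] by (simp add: algebra_simps)
  have s1: "(\<Sum>k\<in>UNIV. \<Sum>j\<in>UNIV. (5/18) * a j * (G l k * B k j)) = (5/18) * a l"
  proof -
    have "(\<Sum>k\<in>UNIV. \<Sum>j\<in>UNIV. (5/18) * a j * (G l k * B k j)) = (\<Sum>j\<in>UNIV. \<Sum>k\<in>UNIV. (5/18) * a j * (G l k * B k j))"
      by (rule sum.swap)
    also have "\<dots> = (\<Sum>j\<in>UNIV. (5/18) * a j * (if l = j then 1 else 0))"
      by (rule sum.cong[OF refl]) (simp only: sum_distrib_left[symmetric] L1)
    also have "\<dots> = (\<Sum>j\<in>UNIV. if l = j then (5/18) * a j else 0)" by (rule sum.cong) auto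
    also have "\<dots> = (5/18) * a l" by simp
    finally show ?thesis .
  qed
  have s2: "(\<Sum>k\<in>UNIV. \<Sum>j\<in>UNIV. (1/18) * a k * (B k j * G j l)) = (1/18) * a l"
  proof -
    have "(\<Sum>k\<in>UNIV. \<Sum>j\<in>UNIV. (1/18) * a k * (B k j * G j l)) = (\<Sum>k\<in>UNIV. (1/18) * a k * (if k = l then 1 else 0))"
      by (rule sum.cong[OF refl]) (simp only: sum_distrib_left[symmetric] L2)
    also have "\<dots> = (\<Sum>k\<in>UNIV. if l = k then (1/18) * a k else 0)" by (rule sum.cong) auto
    also have "\<dots> = (1/18) * a l" by simp
    finally show ?thesis .
  qed
  have s3: "(\<Sum>k\<in>UNIV. \<Sum>j\<in>UNIV. (1/18) * a l * (B k j * G j k)) = (4/18) * a l"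
  proof -
    have inner: "(\<Sum>j\<in>UNIV. B k j * G j k) = 1" for k using L2[of k k] by simp
    have "(\<Sum>k\<in>UNIV. \<Sum>j\<in>UNIV. (1/18) * a l * (B k j * G j k)) = (\<Sum>k\<in>(UNIV::4 set). (1/18) * a l)"
      unfolding sum_distrib_left[symmetric] inner by simp
    also have "\<dots> = (4/18) * a l" by simp
    finally show ?thesis .
  qed
  show ?thesis unfolding e sum_subtractf s1 s2 s3 by simp
qed

lemma alg_metric:
  fixes G B :: "4 \<Rightarrow> 4 \<Rightarrow> real" and d :: "4 \<Rightarrow> 4 \<Rightarrow> 4 \<Rightarrow> real"
  assumes sym: "\<And>i j. G i j = G j i"
    and dsym: "\<And>a b c. d a b c = d a c b"
    and L1: "\<And>a b. (\<Sum>p\<in>UNIV. G a p * B p b) = (if a = b then 1 else 0)"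
  shows "d j k l - (\<Sum>p\<in>UNIV. ((1/2) * (\<Sum>m\<in>UNIV. B p m * (d j m k + d k m j - d m j k))) * G p l)
                 - (\<Sum>p\<in>UNIV. ((1/2) * (\<Sum>m\<in>UNIV. B p m * (d j m l + d l m j - d m j l))) * G k p) = 0"
proof -
  have gen: "(\<Sum>p\<in>UNIV. ((1/2) * (\<Sum>m\<in>UNIV. B p m * A m)) * G q p) = (1/2) * A q" for A q
  proof -
    have "(\<Sum>p\<in>UNIV. ((1/2) * (\<Sum>m\<in>UNIV. B p m * A m)) * G q p)
        = (\<Sum>p\<in>UNIV. \<Sum>m\<in>UNIV. (1/2) * A m * (G q p * B p m))"
      by (simp add: sum_distrib_left sum_distrib_right algebra_simps)
    also have "\<dots> = (\<Sum>m\<in>UNIV. \<Sum>p\<in>UNIV. (1/2) * A m * (G q p * B p m))" by (rule sum.swap)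
    also have "\<dots> = (\<Sum>m\<in>UNIV. (1/2) * A m * (if q = m then 1 else 0))"
      by (rule sum.cong[OF refl]) (simp only: sum_distrib_left[symmetric] L1)
    also have "\<dots> = (\<Sum>m\<in>UNIV. if q = m then (1/2) * A m else 0)" by (rule sum.cong) auto
    also have "\<dots> = (1/2) * A q" by simp
    finally show ?thesis .
  qed
  have a: "(\<Sum>p\<in>UNIV. ((1/2) * (\<Sum>m\<in>UNIV. B p m * (d j m k + d k m j - d m j k))) * G p l)
      = (1/2) * (d j l k + d k l j - d l j k)"
    using gen[of "\<lambda>m. d j m k + d k m j - d m j k" l] by (simp add: sym)
  have b: "(\<Sum>p\<in>UNIV. ((1/2) * (\<Sum>m\<in>UNIV. B p m * (d j m l + d l m j - d m j l))) * G k p)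
      = (1/2) * (d j k l + d l k j - d k j l)"
    using gen[of "\<lambda>m. d j m l + d l m j - d m j l" k] by simp
  show ?thesis unfolding a b using dsym[of j l k] dsym[of k l j] dsym[of l j k] by (simp add: field_simps)
qed

lemma alg_trace_g:
  fixes G B :: "4 \<Rightarrow> 4 \<Rightarrow> real"
  assumes sym: "\<And>i j. G i j = G j i"
    and L2: "\<And>a b. (\<Sum>p\<in>UNIV. B a p * G p b) = (if a = b then 1 else 0)"
  shows "(\<Sum>p\<in>UNIV. \<Sum>q\<in>UNIV. B p q * G p q) = 4"
proof -
  have "(\<Sum>p\<in>UNIV. \<Sum>q\<in>UNIV. B p q * G p q) = (\<Sum>p\<in>UNIV. \<Sum>q\<in>UNIV. B p q * G q p)"
    by (simp add: sym)
  also have "\<dots> = (\<Sum>p\<in>(UNIV::4 set). 1)" by (simp add: L2)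
  also have "\<dots> = 4" by simp
  finally show ?thesis .
qed


lemma L12:
  assumes "lorentzian_at g x"
  shows "\<And>a b. (\<Sum>p\<in>UNIV. g a p x * ginv g p b x) = (if a = b then 1 else 0)"
    and "\<And>a b. (\<Sum>p\<in>UNIV. ginv g a p x * g p b x) = (if a = b then 1 else 0)"
proof -
  note i = inv_facts[OF lor_invertible[OF assms]]
  fix a b
  have "(gmat g x ** matrix_inv (gmat g x)) $ a $ b = mat 1 $ a $ b" using i(1) by simp
  then show "(\<Sum>p\<in>UNIV. g a p x * ginv g p b x) = (if a = b then 1 else 0)"
    by (simp add: matrix_matrix_mult_def mat_def gmat_def ginv_def)
next
  note i = inv_facts[OF lor_invertible[OF assms]]
  fix a b
  have "(matrix_inv (gmat g x) ** gmat g x) $ a $ b = mat 1 $ a $ b" using i(2) by simp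
  then show "(\<Sum>p\<in>UNIV. ginv g a p x * g p b x) = (if a = b then 1 else 0)"
    by (simp add: matrix_matrix_mult_def mat_def gmat_def ginv_def)
qed

lemma Ck_ginv:
  assumes U: "open U" and gs: "\<And>k l. Ck n U (g k l)" and lor: "\<forall>x\<in>U. lorentzian_at g x"
  shows "Ck n U (ginv g i j)"
proof -
  let ?N = "\<lambda>x. det ((\<chi> r c. if c = i then (if r = j then 1 else 0) else g r c x) :: real^4^4)"
  let ?D = "\<lambda>x. det ((\<chi> r c. g r c x) :: real^4^4)"
  have m: "Ck n U (\<lambda>x. if c = i then (if r = j then 1 else 0) else g r c x)" for r c
    by (cases "c = i") (simp_all add: Ck_const gs)
  have N: "Ck n U ?N" by (rule Ck_det[OF U m])
  have D: "Ck n U ?D" by (rule Ck_det[OF U gs])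
  have Dnz: "\<forall>x\<in>U. ?D x \<noteq> 0"
    using lor lor_invertible invertible_det_nz unfolding gmat_def by blast
  have "Ck n U (\<lambda>x. ?N x * inverse (?D x))"
    by (rule Ck_mult[OF U N Ck_inverse[OF U D Dnz]])
  moreover have "\<forall>x\<in>U. ginv g i j x = ?N x * inverse (?D x)"
  proof
    fix x assume x: "x \<in> U"
    have ge: "gmat g x $ r $ c = g r c x" for r c by (simp add: gmat_def)
    have ge2: "gmat g x = (\<chi> r c. g r c x)" by (simp add: gmat_def)
    show "ginv g i j x = ?N x * inverse (?D x)"
    proof -
      have iv: "invertible ((\<chi> r c. g r c x) :: real^4^4)"
        using lor_invertible[OF lor[rule_format, OF x]] unfolding ge2 .
      have eqm: "((\<chi> r c. if c = i then (if r = j then 1 else 0) else ((\<chi> r c. g r c x) :: real^4^4)$r$c) :: real^4^4)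
         = (\<chi> r c. if c = i then (if r = j then 1 else 0) else g r c x)"
        by (simp add: vec_eq_iff)
      show ?thesis unfolding ginv_def ge2 cramer_inv[OF iv] eqm by (simp add: divide_inverse)
    qed
  qed
  ultimately show ?thesis by (rule Ck_cong[OF U, THEN iffD2, rotated])
qed

lemma Ck_trace:
  assumes U: "open U" and gs: "\<And>k l. Ck n U (g k l)" and Ks: "\<And>k l. Ck n U (K k l)"
    and lor: "\<forall>x\<in>U. lorentzian_at g x"
  shows "Ck n U (trace g K)"
proof -
  have "Ck n U (\<lambda>x. \<Sum>p\<in>UNIV. \<Sum>q\<in>UNIV. ginv g p q x * K p q x)"
    by (intro Ck_sum[OF U] Ck_mult[OF U] Ck_ginv[OF U gs lor] Ks) simp_all
  moreover have "trace g K = (\<lambda>x. \<Sum>p\<in>UNIV. \<Sum>q\<in>UNIV. ginv g p q x * K p q x)"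
    by (rule ext) (simp add: trace_def)
  ultimately show ?thesis by simp
qed

lemma metric_compat:
  assumes U: "open U" and x: "x \<in> U" and lor: "\<forall>x\<in>U. lorentzian_at g x"
  shows "cov g g j k l x = 0"
proof -
  have gsym: "\<forall>y\<in>U. g i j y = g j i y" for i j using lor unfolding lorentzian_at_def by blast
  have dsym: "pd a (g b c) x = pd a (g c b) x" for a b c
    by (rule pd_cong[OF U x gsym])
  have sym: "g i j x = g j i x" for i j using gsym x by blast
  show ?thesis
    unfolding cov_def christoffel_def
    by (rule alg_metric[where G = "\<lambda>i j. g i j x" and B = "\<lambda>i j. ginv g i j x"
          and d = "\<lambda>a b c. pd a (g b c) x", OF sym dsym L12(1)[OF lor[rule_format, OF x]]])
qed


lemma pd_C:
  assumes "f differentiable at x" "t differentiable at x" "h differentiable at x"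
  shows "pd j (\<lambda>y. f y - t y / 3 * h y) x = pd j f x - (pd j t x / 3 * h x + t x / 3 * pd j h x)"
proof -
  have "((\<lambda>y. f y - t y / 3 * h y) has_derivative
        (\<lambda>v. frechet_derivative f (at x) v - (frechet_derivative t (at x) v / 3 * h x + t x / 3 * frechet_derivative h (at x) v))) (at x)"
    using pd_works[OF assms(1)] pd_works[OF assms(2)] pd_works[OF assms(3)]
    by (auto intro!: derivative_eq_intros simp: algebra_simps)
  from pd_has[OF this] show ?thesis unfolding pd_def by simp
qed

lemma cov_C:
  assumes "\<And>k l. K k l differentiable at x" "t differentiable at x" "\<And>k l. g k l differentiable at x"
  shows "cov g (\<lambda>k l x. K k l x - t x / 3 * g k l x) j k l x
     = cov g K j k l x - (pd j t x / 3 * g k l x + t x / 3 * cov g g j k l x)"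
  unfolding cov_def pd_C[OF assms(1) assms(2) assms(3)]
  by (simp add: sum_subtractf right_diff_distrib sum_distrib_left sum_distrib_right algebra_simps)

lemma Ck_diff:
  assumes U: "open U" shows "Ck n U f \<Longrightarrow> Ck n U h \<Longrightarrow> Ck n U (\<lambda>x. f x - h x)"
proof -
  assume f: "Ck n U f" and h: "Ck n U h"
  have "Ck n U (\<lambda>x. f x + (-1) * h x)" by (rule Ck_add[OF U f Ck_mult[OF U Ck_const h]])
  then show ?thesis by simp
qed


theorem mainTheorem9:
  fixes U :: "(real ^ 4) set" and g K :: tens2
  assumes U: "open U"
    and g_smooth: "smooth_tensor U g"
    and g_lor: "\<forall>x\<in>U. lorentzian_at g x"
    and K_smooth: "smooth_tensor U K"
    and K_sym: "sym_tensor U K"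
    and hyp: "\<forall>x\<in>U. \<forall>j k l. cov g K j k l x =
        (5/18) * pd j (trace g K) x * g k l x
      - (1/18) * pd k (trace g K) x * g j l x
      - (1/18) * pd l (trace g K) x * g j k x"
  defines "C \<equiv> (\<lambda>k l x. K k l x - trace g K x / 3 * g k l x)"
  shows "divergence_free U g K \<and> conformal_killing U g K
     \<and> codazzi U g C
     \<and> (\<forall>x\<in>U. \<forall>k l. K k l x = C k l x - g k l x * trace g C x)
     \<and> (\<forall>T. (\<forall>x\<in>U. \<forall>k l. einstein g k l x = T k l x + K k l x) \<longrightarrow>
            conformal_killing_gravity U g T \<and> cotton_gravity_codazzi U g T)"
proof -
  have gs: "\<And>k l n. Ck n U (g k l)" using g_smooth unfolding smooth_tensor_def smooth_fun_def by blast
  have Ks: "\<And>k l n. Ck n U (K k l)" using K_smooth unfolding smooth_tensor_def smooth_fun_def by blast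
  have ts: "\<And>n. Ck n U (trace g K)" by (rule Ck_trace[OF U gs Ks g_lor])
  have sym: "\<And>i j. g i j x = g j i x" if "x \<in> U" for x
    using g_lor that unfolding lorentzian_at_def by blast
  have Ksym: "\<And>i j. K i j x = K j i x" if "x \<in> U" for x
    using K_sym that unfolding sym_tensor_def by blast
  have gd: "\<And>k l. g k l differentiable at x" if "x \<in> U" for x
    using Ck_diff_at[OF U gs that] .
  have Kd: "\<And>k l. K k l differentiable at x" if "x \<in> U" for x
    using Ck_diff_at[OF U Ks that] .
  have td: "trace g K differentiable at x" if "x \<in> U" for x
    using Ck_diff_at[OF U ts that] .
  note L = L12[OF g_lor[rule_format]]

  have divf: "divergence_free U g K"
    unfolding divergence_free_def
  proof (intro ballI allI)
    fix x l assume x: "x \<in> U"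
    have "divergence g K l x = (\<Sum>k\<in>UNIV. \<Sum>j\<in>UNIV. ginv g k j x *
        ((5/18) * pd j (trace g K) x * g k l x - (1/18) * pd k (trace g K) x * g j l x
         - (1/18) * pd l (trace g K) x * g j k x))"
      unfolding divergence_def using hyp x by simp
    also have "\<dots> = 0"
      by (rule alg_div[where G = "\<lambda>i j. g i j x" and B = "\<lambda>i j. ginv g i j x"
           and a = "\<lambda>j. pd j (trace g K) x", OF sym[OF x] L(1)[OF x] L(2)[OF x]])
    finally show "divergence g K l x = 0" .
  qed

  have ck: "conformal_killing U g K"
    unfolding conformal_killing_def
  proof (intro ballI allI)
    fix x j k l assume x: "x \<in> U"
    have s: "g j l x = g l j x" "g l k x = g k l x" "g k j x = g j k x" using sym[OF x] by auto
    show "cov g K j k l x + cov g K l j k x + cov g K k l j x =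
     (1/6) * (pd j (trace g K) x * g k l x + pd l (trace g K) x * g j k x
              + pd k (trace g K) x * g l j x)"
      unfolding hyp[rule_format, OF x] s by (simp add: field_simps)
  qed

  have covC: "cov g C j k l x = cov g K j k l x - pd j (trace g K) x / 3 * g k l x" if x: "x \<in> U" for j k l x
    unfolding C_def cov_C[OF Kd[OF x] td[OF x] gd[OF x]] metric_compat[OF U x g_lor] by simp

  have cod: "codazzi U g C"
    unfolding codazzi_def
  proof (intro ballI allI)
    fix x j k l assume x: "x \<in> U"
    have s: "g k j x = g j k x" using sym[OF x] by auto
    show "cov g C j k l x = cov g C k j l x"
      unfolding covC[OF x] hyp[rule_format, OF x] s by (simp add: field_simps)
  qed

  have trC: "trace g C x = - trace g K x / 3" if x: "x \<in> U" for x
  proof -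
    have "trace g C x = trace g K x - trace g K x / 3 * (\<Sum>p\<in>UNIV. \<Sum>q\<in>UNIV. ginv g p q x * g p q x)"
    proof -
      have e: "ginv g p q x * (K p q x - trace g K x / 3 * g p q x)
          = ginv g p q x * K p q x - trace g K x / 3 * (ginv g p q x * g p q x)" for p q
        by (simp add: algebra_simps)
      have "trace g C x = (\<Sum>p\<in>UNIV. \<Sum>q\<in>UNIV. ginv g p q x * (K p q x - trace g K x / 3 * g p q x))"
        by (subst trace_def) (simp add: C_def)
      also have "\<dots> = (\<Sum>p\<in>UNIV. \<Sum>q\<in>UNIV. ginv g p q x * K p q x - trace g K x / 3 * (ginv g p q x * g p q x))"
        by (simp only: e)
      also have "\<dots> = trace g K x - trace g K x / 3 * (\<Sum>p\<in>UNIV. \<Sum>q\<in>UNIV. ginv g p q x * g p q x)"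
        by (simp only: sum_subtractf sum_distrib_left[symmetric] trace_def[of g K x, symmetric])
      finally show ?thesis .
    qed
    also have "\<dots> = - trace g K x / 3"
      unfolding alg_trace_g[where G = "\<lambda>i j. g i j x", OF sym[OF x] L(2)[OF x]] by simp
    finally show ?thesis .
  qed

  have KC: "\<forall>x\<in>U. \<forall>k l. K k l x = C k l x - g k l x * trace g C x"
    using trC unfolding C_def by (simp add: algebra_simps)

  have Cs: "smooth_tensor U C"
    unfolding smooth_tensor_def smooth_fun_def
  proof (intro allI)
    fix k l n
    have "Ck n U (\<lambda>x. K k l x - (1/3) * (trace g K x * g k l x))"
      by (rule Ck_diff[OF U Ks Ck_mult[OF U Ck_const Ck_mult[OF U ts gs]]])
    moreover have "\<forall>x\<in>U. C k l x = K k l x - (1/3) * (trace g K x * g k l x)"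
      unfolding C_def by simp
    ultimately show "Ck n U (C k l)" by (rule Ck_cong[OF U, THEN iffD2, rotated])
  qed

  have Csym: "sym_tensor U C"
    unfolding sym_tensor_def C_def using sym Ksym by simp

  have grav: "(\<forall>T. (\<forall>x\<in>U. \<forall>k l. einstein g k l x = T k l x + K k l x) \<longrightarrow>
            conformal_killing_gravity U g T \<and> cotton_gravity_codazzi U g T)"
  proof (intro allI impI conjI)
    fix T assume E: "\<forall>x\<in>U. \<forall>k l. einstein g k l x = T k l x + K k l x"
    show "conformal_killing_gravity U g T"
      unfolding conformal_killing_gravity_def
      using K_smooth K_sym divf ck E by blast
    have "\<forall>x\<in>U. \<forall>k l. einstein g k l x = T k l x + C k l x - g k l x * trace g C x"
      using E KC by (metis add_diff_eq)
    then show "cotton_gravity_codazzi U g T"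
      unfolding cotton_gravity_codazzi_def
      using Cs Csym cod by blast
  qed

  show ?thesis using divf ck cod KC grav by blast
qed

end
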